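(* Let $K=\mathbb{Q}(\zeta)$ be a cubic field, where $\zeta$ is a root of $\mathcal{C}(x,1)$ and $\mathcal{C}=(a,b,c,d)$ is the canonical binary cubic form of $K$. Let $\rho=a\zeta$ and $\omega=a\zeta^2+b\zeta$, so that $\mathcal{O}_K=\mathbb{Z}+\mathbb{Z}\rho+\mathbb{Z}\omega$. For $\alpha=u+x\rho+y\omega$ with $u,x,y\in\mathbb{Q}$ define \[ N(\alpha)=\begin{pmatrix} u & -ad\,y & -ad\,x-bd\,y\\ x & u-bx-cy & -cx-dy\\ y & ax & u-cy\end{pmatrix}. \] Let $M_{\mathbb{Z}}$ (resp. $M_{\mathbb{Q}}$) be the set of all matrices of this form with $u,x,y\in\mathbb{Z}$ (resp. $u,x,y\in\mathbb{Q}$). Then $\phi:\mathcal{O}_K\to M_{\mathbb{Z}}$, $\alpha\mapsto N(\alpha)$, is a ring isomorphism and $\psi:K\to M_{\mathbb{Q}}$, $\alpha\mapsto N(\alpha)$, is a field isomorphism (with the usual matrix addition and multiplication). Moreover, for every $\alpha\in K$, the trace of $\alpha$ equals the trace of $N(\alpha)$ and the norm of $\alpha$ equals $\det N(\alpha)$.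
   Context: A binary cubic form is $\mathcal{C}(x,y)=ax^3+bx^2y+cxy^2+dy^3$ with $a,b,c,d\in\mathbb{Z}$, irreducible over $\mathbb{Q}$, abbreviated $(a,b,c,d)$; its discriminant is $b^2c^2+18abcd-4ac^3-4b^3d-27a^2d^2$. The Davenport–Heilbronn map sends (the conjugacy class of) a cubic field $L$ with integral basis $\{1,\omega_2,\omega_3\}$ to the $\mathrm{GL}_2(\mathbb{Z})$-class of the form $\frac{1}{\mathrm{disc}(L)}N\big((\omega_2-\omega_2')x-(\omega_3-\omega_3')y\big)$, giving a bijection between cubic fields (up to conjugacy) and certain $\mathrm{GL}_2(\mathbb{Z})$-classes of binary cubic forms of the same discriminant. The canonical binary cubic form of a cubic field $K$ is a binary cubic form $\mathcal{C}$ in the image of the Davenport–Heilbronn map corresponding to $K$, with discriminant equal to that of $K$ and with $K=\mathbb{Q}(\zeta)$, $\mathcal{C}(\zeta,1)=0$; for such $\mathcal{C}$, $\{1,a\zeta,a\zeta^2+b\zeta\}$ is an integral basis of $\mathcal{O}_K$ (Belabas). *)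

theory Defs
  imports "HOL-Analysis.Analysis" "HOL-Computational_Algebra.Polynomial" "HOL-Library.Numeral_Type"
begin

definition cubic_poly :: "int \<Rightarrow> int \<Rightarrow> int \<Rightarrow> int \<Rightarrow> rat poly" where
  "cubic_poly a b c d = [:of_int d, of_int c, of_int b, of_int a:]"

definition is_subfield :: "complex set \<Rightarrow> bool" where
  "is_subfield S \<longleftrightarrow> 0 \<in> S \<and> 1 \<in> S \<and> (\<forall>x\<in>S. \<forall>y\<in>S. x + y \<in> S \<and> x * y \<in> S)
     \<and> (\<forall>x\<in>S. - x \<in> S \<and> inverse x \<in> S)"

definition Qadj :: "complex \<Rightarrow> complex set" where
  "Qadj z = \<Inter>{S. is_subfield S \<and> z \<in> S}"

definition ring_of_integers :: "complex set \<Rightarrow> complex set" where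
  "ring_of_integers K = {z \<in> K. algebraic_int z}"

definition embeddings :: "complex set \<Rightarrow> (complex \<Rightarrow> complex) set" where
  "embeddings K = {\<sigma>. \<sigma> 1 = 1 \<and> (\<forall>x\<in>K. \<forall>y\<in>K. \<sigma> (x + y) = \<sigma> x + \<sigma> y \<and> \<sigma> (x * y) = \<sigma> x * \<sigma> y)
     \<and> (\<forall>x. x \<notin> K \<longrightarrow> \<sigma> x = 0)}"

definition field_trace :: "complex set \<Rightarrow> complex \<Rightarrow> complex" where
  "field_trace K \<alpha> = (\<Sum>\<sigma>\<in>embeddings K. \<sigma> \<alpha>)"

definition field_norm :: "complex set \<Rightarrow> complex \<Rightarrow> complex" where
  "field_norm K \<alpha> = (\<Prod>\<sigma>\<in>embeddings K. \<sigma> \<alpha>)"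

definition Nmat :: "int \<Rightarrow> int \<Rightarrow> int \<Rightarrow> int \<Rightarrow> rat \<Rightarrow> rat \<Rightarrow> rat \<Rightarrow> rat^3^3" where
  "Nmat a b c d u x y = (let A = of_int a; B = of_int b; C = of_int c; D = of_int d;
     row1 = [u, - A*D*y, - A*D*x - B*D*y];
     row2 = [x, u - B*x - C*y, - C*x - D*y];
     row3 = [y, A*x, u - C*y];
     idx = (\<lambda>i::3. if i = 1 then 0 else if i = 2 then 1 else (2::nat))
   in (\<chi> i j. ([row1, row2, row3] ! idx i) ! idx j))"

definition coords :: "int \<Rightarrow> int \<Rightarrow> complex \<Rightarrow> complex \<Rightarrow> rat \<times> rat \<times> rat" where
  "coords a b \<zeta> \<alpha> = (THE (u, x, y). \<alpha> = of_rat u + of_rat x * (of_int a * \<zeta>)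
       + of_rat y * (of_int a * \<zeta>^2 + of_int b * \<zeta>))"

definition Nof :: "int \<Rightarrow> int \<Rightarrow> int \<Rightarrow> int \<Rightarrow> complex \<Rightarrow> complex \<Rightarrow> rat^3^3" where
  "Nof a b c d \<zeta> \<alpha> = (case coords a b \<zeta> \<alpha> of (u, x, y) \<Rightarrow> Nmat a b c d u x y)"

end

theory Submission
  imports Defs "HOL-Computational_Algebra.Polynomial_Factorial" "HOL-Computational_Algebra.Field_as_Ring"
    "HOL-Computational_Algebra.Fundamental_Theorem_Algebra"
begin


lemma Nmat_entries:
  "Nmat a b c d u x y $ 1 $ 1 = u"
  "Nmat a b c d u x y $ 1 $ 2 = - of_int a * of_int d * y"
  "Nmat a b c d u x y $ 1 $ 3 = - of_int a * of_int d * x - of_int b * of_int d * y"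
  "Nmat a b c d u x y $ 2 $ 1 = x"
  "Nmat a b c d u x y $ 2 $ 2 = u - of_int b * x - of_int c * y"
  "Nmat a b c d u x y $ 2 $ 3 = - of_int c * x - of_int d * y"
  "Nmat a b c d u x y $ 3 $ 1 = y"
  "Nmat a b c d u x y $ 3 $ 2 = of_int a * x"
  "Nmat a b c d u x y $ 3 $ 3 = u - of_int c * y"
  by (simp_all add: Nmat_def Let_def)

definition ev :: "rat poly \<Rightarrow> complex \<Rightarrow> complex" where
  "ev p z = poly (map_poly of_rat p) z"

lemma ev_pCons[simp]: "ev (pCons c p) z = of_rat c + z * ev p z"
  by (simp add: ev_def map_poly_pCons)

lemma ev_0[simp]: "ev 0 z = 0" by (simp add: ev_def)

lemma ev_add[simp]: "ev (p + q) z = ev p z + ev q z"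
proof (induction p arbitrary: q rule: pCons_induct)
  case 0 then show ?case by simp
next
  case (pCons c p)
  obtain c' q' where q: "q = pCons c' q'" by (cases q)
  show ?case by (simp add: q pCons.IH algebra_simps of_rat_add)
qed

lemma ev_smult[simp]: "ev (smult c p) z = of_rat c * ev p z"
  by (induction p rule: pCons_induct) (simp_all add: algebra_simps of_rat_mult)

lemma ev_mult[simp]: "ev (p * q) z = ev p z * ev q z"
  by (induction p rule: pCons_induct) (simp_all add: algebra_simps)

lemma ev_minus[simp]: "ev (- p) z = - ev p z"
  using ev_smult[of "-1" p z] by (simp add: of_rat_minus)

lemma ev_1[simp]: "ev 1 z = 1"
  by (simp add: ev_def)

lemma deg2_eq: "degree (r::rat poly) \<le> 2 \<Longrightarrow> r = [:coeff r 0, coeff r 1, coeff r 2:]"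
  by (auto simp: poly_eq_iff coeff_pCons coeff_eq_0 numeral_2_eq_2 split: nat.split)

definition isroot :: "int \<Rightarrow> int \<Rightarrow> int \<Rightarrow> int \<Rightarrow> complex \<Rightarrow> bool" where
  "isroot a b c d z \<longleftrightarrow> of_int a * z^3 + of_int b * z^2 + of_int c * z + of_int d = 0"

locale cubic =
  fixes a b c d :: int and \<zeta> :: complex
  assumes a0: "a \<noteq> 0" and irr: "irreducible (cubic_poly a b c d)"
    and root: "of_int a * \<zeta>^3 + of_int b * \<zeta>^2 + of_int c * \<zeta> + of_int d = 0"
begin

abbreviation "f \<equiv> cubic_poly a b c d"

lemma ev_f: "isroot a b c d z \<Longrightarrow> ev f z = 0"
  by (simp add: cubic_poly_def isroot_def of_rat_of_int_eq algebra_simps power2_eq_square power3_eq_cube)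

lemma deg_f: "degree f = 3"
  using a0 by (simp add: cubic_poly_def)

lemma bezout_one:
  assumes "g \<noteq> 0" "degree g \<le> 2"
  obtains s t where "s * f + t * g = 1"
proof -
  have "prime_elem f" using irr by (simp add: prime_elem_iff_irreducible)
  moreover have "\<not> f dvd g"
  proof
    assume "f dvd g"
    then have "degree f \<le> degree g" using assms(1) by (rule dvd_imp_degree_le)
    then show False using assms(2) deg_f by simp
  qed
  ultimately have "coprime f g" by (rule prime_elem_imp_coprime)
  then have "gcd f g = 1" by simp
  then show ?thesis using that bezout_coefficients_fst_snd[of f g] by metis
qed

lemma ev_nonzero:
  assumes "isroot a b c d z" "g \<noteq> 0" "degree g \<le> 2"
  shows "ev g z \<noteq> 0"
proof
  assume g: "ev g z = 0"
  obtain s t where "s * f + t * g = 1" using bezout_one assms(2,3) by blast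
  then have "ev (s * f + t * g) z = 1" by simp
  then show False using g ev_f[OF assms(1)] by simp
qed

lemma lin_indep:
  assumes "isroot a b c d z" "of_rat p + of_rat q * z + of_rat r * z^2 = 0"
  shows "p = 0 \<and> q = 0 \<and> r = 0"
proof (rule ccontr)
  assume "\<not> (p = 0 \<and> q = 0 \<and> r = 0)"
  then have "[:p,q,r:] \<noteq> 0" by auto
  moreover have "degree [:p,q,r:] \<le> 2"
    by (metis degree_pCons_le le_SucI numeral_2_eq_2 le_trans degree_pCons_eq_if Suc_le_mono)
  ultimately have "ev [:p,q,r:] z \<noteq> 0" using ev_nonzero assms(1) by blast
  then show False using assms(2) by (simp add: algebra_simps power2_eq_square)
qed

lemma ev_reduce:
  assumes "isroot a b c d z"
  shows "\<exists>p q r. ev g z = of_rat p + of_rat q * z + of_rat r * z^2"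
proof -
  have "g = (g div f) * f + g mod f" by simp
  then have "ev g z = ev (g mod f) z"
    using ev_f[OF assms] by (metis add_0 ev_add ev_mult mult_zero_right)
  moreover have "degree (g mod f) \<le> 2"
  proof -
    have "f \<noteq> 0" using deg_f by auto
    then have "g mod f = 0 \<or> degree (g mod f) < degree f" using degree_mod_less by blast
    then show ?thesis using deg_f by auto
  qed
  ultimately have "ev g z = ev [:coeff (g mod f) 0, coeff (g mod f) 1, coeff (g mod f) 2:] z"
    using deg2_eq by metis
  then show ?thesis by (auto simp: algebra_simps power2_eq_square)
qed


definition S :: "complex set" where
  "S = {of_rat p + of_rat q * \<zeta> + of_rat r * \<zeta>^2 | p q r. True}"

lemma root_zeta: "isroot a b c d \<zeta>" using root by (simp add: isroot_def)

lemma S_ev: "ev g \<zeta> \<in> S"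
  using ev_reduce[OF root_zeta, of g] by (auto simp: S_def)

lemma S_ev_iff: "x \<in> S \<longleftrightarrow> (\<exists>g. x = ev g \<zeta>)"
proof
  assume "x \<in> S"
  then obtain p q r where "x = of_rat p + of_rat q * \<zeta> + of_rat r * \<zeta>^2" by (auto simp: S_def)
  then have "x = ev [:p,q,r:] \<zeta>" by (simp add: algebra_simps power2_eq_square)
  then show "\<exists>g. x = ev g \<zeta>" by blast
qed (use S_ev in auto)

lemma S_subfield: "is_subfield S"
  unfolding is_subfield_def
proof (intro conjI ballI)
  show "0 \<in> S" using S_ev[of 0] by simp
  show "1 \<in> S" using S_ev[of 1] by simp
  fix x y assume x: "x \<in> S" and y: "y \<in> S"
  then obtain g h where g: "x = ev g \<zeta>" and h: "y = ev h \<zeta>" using S_ev_iff by blast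
  show "x + y \<in> S" using S_ev[of "g+h"] g h by simp
  show "x * y \<in> S" using S_ev[of "g*h"] g h by simp
next
  fix x assume x: "x \<in> S"
  then obtain g where g: "x = ev g \<zeta>" using S_ev_iff by blast
  show "- x \<in> S" using S_ev[of "- g"] g by simp
  show "inverse x \<in> S"
  proof (cases "x = 0")
    case True then show ?thesis using S_ev[of 0] by simp
  next
    case False
    from x obtain p q r where x': "x = of_rat p + of_rat q * \<zeta> + of_rat r * \<zeta>^2" by (auto simp: S_def)
    have xe: "x = ev [:p,q,r:] \<zeta>" using x' by (simp add: algebra_simps power2_eq_square)
    have "[:p,q,r:] \<noteq> 0" using False xe by auto
    moreover have "degree [:p,q,r:] \<le> 2"
      by (metis degree_pCons_le le_SucI numeral_2_eq_2 le_trans degree_pCons_eq_if Suc_le_mono)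
    ultimately obtain s t where st: "s * f + t * [:p,q,r:] = 1" using bezout_one by blast
    have "ev (s * f + t * [:p,q,r:]) \<zeta> = 1" using st by simp
    then have "ev s \<zeta> * ev f \<zeta> + ev t \<zeta> * x = 1" unfolding xe by (simp only: ev_add ev_mult)
    then have "ev t \<zeta> * x = 1" using ev_f[OF root_zeta] by simp
    then have "inverse x = ev t \<zeta>" by (metis inverse_unique mult.commute)
    then show ?thesis using S_ev by simp
  qed
qed

lemma subfield_nat: "is_subfield T \<Longrightarrow> of_nat n \<in> T"
  by (induction n) (auto simp: is_subfield_def)

lemma subfield_int: "is_subfield T \<Longrightarrow> of_int n \<in> T"
proof (cases "n \<ge> 0")
  case True
  assume T: "is_subfield T"
  then show ?thesis using subfield_nat[OF T, of "nat n"] True by simp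
next
  case False
  assume T: "is_subfield T"
  have "- of_nat (nat (-n)) \<in> T" using subfield_nat[OF T, of "nat (-n)"] T by (auto simp: is_subfield_def)
  then show ?thesis using False by simp
qed

lemma subfield_rat: "is_subfield T \<Longrightarrow> of_rat q \<in> T"
proof -
  assume T: "is_subfield T"
  obtain n m where nm: "quotient_of q = (n, m)" by (cases "quotient_of q")
  then have q: "q = of_int n / of_int m" by (rule quotient_of_div)
  have "of_rat q = of_int n * inverse (of_int m :: complex)"
    by (simp add: q of_rat_divide divide_inverse of_rat_mult of_rat_inverse of_rat_of_int_eq)
  then show ?thesis using T subfield_int[OF T, of n] subfield_int[OF T, of m] by (simp add: is_subfield_def)
qed

lemma S_sub: "is_subfield T \<Longrightarrow> \<zeta> \<in> T \<Longrightarrow> S \<subseteq> T"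
proof
  fix x assume T: "is_subfield T" and z: "\<zeta> \<in> T" and "x \<in> S"
  then obtain p q r where x: "x = of_rat p + of_rat q * \<zeta> + of_rat r * \<zeta>^2" by (auto simp: S_def)
  have cl: "u \<in> T \<Longrightarrow> v \<in> T \<Longrightarrow> u + v \<in> T \<and> u * v \<in> T" for u v using T by (auto simp: is_subfield_def)
  show "x \<in> T" unfolding x power2_eq_square using cl z subfield_rat[OF T] by metis
qed

lemma zeta_S: "\<zeta> \<in> S"
  unfolding S_def by (rule CollectI, rule exI[of _ 0], rule exI[of _ 1], rule exI[of _ 0]) simp

lemma K_eq: "Qadj \<zeta> = S"
  unfolding Qadj_def using S_sub S_subfield zeta_S by blast

definition E :: "complex \<Rightarrow> rat \<Rightarrow> rat \<Rightarrow> rat \<Rightarrow> complex" where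
  "E z u x y = of_rat u + of_rat x * (of_int a * z) + of_rat y * (of_int a * z^2 + of_int b * z)"

lemma E_alt: "E z u x y = of_rat u + of_rat (of_int a * x + of_int b * y) * z + of_rat (of_int a * y) * z^2"
  by (simp add: E_def of_rat_add of_rat_mult algebra_simps)

lemma E_inj:
  assumes "isroot a b c d z" "E z u x y = E z u' x' y'"
  shows "u = u' \<and> x = x' \<and> y = y'"
proof -
  have "of_rat (u - u') + of_rat (of_int a * (x - x') + of_int b * (y - y')) * z + of_rat (of_int a * (y - y')) * z^2 = 0"
    using assms(2) unfolding E_alt by (simp add: of_rat_add of_rat_mult of_rat_diff algebra_simps)
  from lin_indep[OF assms(1) this] a0 show ?thesis by auto
qed

lemma S_E: "S = range (\<lambda>(u,x,y). E \<zeta> u x y)"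
proof (intro set_eqI iffI)
  fix w assume "w \<in> S"
  then obtain p q r where w: "w = of_rat p + of_rat q * \<zeta> + of_rat r * \<zeta>^2" by (auto simp: S_def)
  define y where "y = r / of_int a"
  define x where "x = (q - of_int b * y) / of_int a"
  have "w = E \<zeta> p x y" unfolding E_alt w x_def y_def using a0 by simp
  then have eq: "w = (\<lambda>(u,x,y). E \<zeta> u x y) (p,x,y)" by simp
  show "w \<in> range (\<lambda>(u,x,y). E \<zeta> u x y)" by (subst eq) (rule rangeI)
next
  fix w assume "w \<in> range (\<lambda>(u,x,y). E \<zeta> u x y)"
  then obtain u x y where "w = E \<zeta> u x y" by auto
  then show "w \<in> S" unfolding E_alt S_def by blast
qed

lemma coords_E: "coords a b \<zeta> (E \<zeta> u x y) = (u, x, y)"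
  unfolding coords_def
proof (rule the_equality)
  show "case (u, x, y) of (u', x', y') \<Rightarrow> E \<zeta> u x y = of_rat u' + of_rat x' * (of_int a * \<zeta>) + of_rat y' * (of_int a * \<zeta>^2 + of_int b * \<zeta>)"
    by (simp add: E_def)
next
  fix t assume "case t of (u', x', y') \<Rightarrow> E \<zeta> u x y = of_rat u' + of_rat x' * (of_int a * \<zeta>) + of_rat y' * (of_int a * \<zeta>^2 + of_int b * \<zeta>)"
  then obtain u' x' y' where t: "t = (u', x', y')" and "E \<zeta> u x y = E \<zeta> u' x' y'"
    by (cases t) (auto simp: E_def)
  then show "t = (u, x, y)" using E_inj[OF root_zeta] by metis
qed

lemma Nof_E: "Nof a b c d \<zeta> (E \<zeta> u x y) = Nmat a b c d u x y"
  by (simp add: Nof_def coords_E)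


definition mu :: "rat \<Rightarrow> rat \<Rightarrow> rat \<Rightarrow> rat \<Rightarrow> rat \<Rightarrow> rat \<Rightarrow> rat" where
  "mu u x y u' x' y' = u*u' - of_int a * of_int d * y * x' + (- of_int a * of_int d * x - of_int b * of_int d * y) * y'"
definition mx :: "rat \<Rightarrow> rat \<Rightarrow> rat \<Rightarrow> rat \<Rightarrow> rat \<Rightarrow> rat \<Rightarrow> rat" where
  "mx u x y u' x' y' = x*u' + (u - of_int b * x - of_int c * y) * x' + (- of_int c * x - of_int d * y) * y'"
definition my :: "rat \<Rightarrow> rat \<Rightarrow> rat \<Rightarrow> rat \<Rightarrow> rat \<Rightarrow> rat \<Rightarrow> rat" where
  "my u x y u' x' y' = y*u' + of_int a * x * x' + (u - of_int c * y) * y'"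

lemma E_mult_aux:
  "E z u x y * E z u' x' y' - E z (mu u x y u' x' y') (mx u x y u' x' y') (my u x y u' x' y') =
   (of_rat (x*y' + y*x') * of_int a + of_rat (y*y') * (of_int a * z + of_int b)) *
   (of_int a * z^3 + of_int b * z^2 + of_int c * z + of_int d)"
  by (simp add: E_def mu_def mx_def my_def of_rat_add of_rat_mult of_rat_diff of_rat_minus
      of_rat_of_int_eq power2_eq_square power3_eq_cube algebra_simps)

lemma E_mult:
  "isroot a b c d z \<Longrightarrow> E z u x y * E z u' x' y' = E z (mu u x y u' x' y') (mx u x y u' x' y') (my u x y u' x' y')"
  using E_mult_aux[of z u x y u' x' y'] by (simp add: isroot_def)

lemma E_add: "E z u x y + E z u' x' y' = E z (u+u') (x+x') (y+y')"
  by (simp add: E_def of_rat_add algebra_simps)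

lemma Nmat_mult:
  "Nmat a b c d (mu u x y u' x' y') (mx u x y u' x' y') (my u x y u' x' y') = Nmat a b c d u x y ** Nmat a b c d u' x' y'"
  by (simp add: vec_eq_iff forall_3 matrix_matrix_mult_def sum_3 Nmat_entries mu_def mx_def my_def algebra_simps)

lemma Nmat_add:
  "Nmat a b c d (u+u') (x+x') (y+y') = Nmat a b c d u x y + Nmat a b c d u' x' y'"
  by (simp add: vec_eq_iff forall_3 Nmat_entries algebra_simps)

lemma Nmat_inj: "Nmat a b c d u x y = Nmat a b c d u' x' y' \<Longrightarrow> u = u' \<and> x = x' \<and> y = y'"
  by (metis Nmat_entries(1,4,7))


lemma S_add[simp]: "x \<in> S \<Longrightarrow> y \<in> S \<Longrightarrow> x + y \<in> S"
  and S_mul[simp]: "x \<in> S \<Longrightarrow> y \<in> S \<Longrightarrow> x * y \<in> S"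
  and S_uminus[simp]: "x \<in> S \<Longrightarrow> - x \<in> S"
  using S_subfield by (auto simp: is_subfield_def)

lemma S_rat[simp]: "of_rat q \<in> S" and S_int[simp]: "of_int n \<in> S" and S_nat[simp]: "of_nat m \<in> S"
  and S_zeta[simp]: "\<zeta> \<in> S"
  using subfield_rat[OF S_subfield] subfield_int[OF S_subfield] subfield_nat[OF S_subfield] zeta_S by auto

lemma S_E_mem[simp]: "E \<zeta> u x y \<in> S"
  unfolding S_def E_alt by blast

context
  fixes \<sigma> assumes sig: "\<sigma> \<in> embeddings S"
begin

lemma sig_add[simp]: "x \<in> S \<Longrightarrow> y \<in> S \<Longrightarrow> \<sigma> (x + y) = \<sigma> x + \<sigma> y"
  and sig_mul[simp]: "x \<in> S \<Longrightarrow> y \<in> S \<Longrightarrow> \<sigma> (x * y) = \<sigma> x * \<sigma> y"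
  and sig_1[simp]: "\<sigma> 1 = 1"
  and sig_out: "x \<notin> S \<Longrightarrow> \<sigma> x = 0"
  using sig by (auto simp: embeddings_def)

lemma sig_0[simp]: "\<sigma> 0 = 0"
  using sig_add[of 0 0] S_rat[of 0] by simp

lemma sig_nat[simp]: "\<sigma> (of_nat n) = of_nat n"
proof (induction n)
  case (Suc n)
  have "\<sigma> (of_nat (Suc n)) = \<sigma> (1 + of_nat n)" by simp
  also have "\<dots> = 1 + of_nat n" using Suc S_rat[of 1] by (simp del: of_nat_Suc)
  finally show ?case by simp
qed simp

lemma sig_uminus[simp]: "x \<in> S \<Longrightarrow> \<sigma> (- x) = - \<sigma> x"
  using sig_add[of x "-x"] by (simp add: eq_neg_iff_add_eq_0 add.commute)

lemma sig_int[simp]: "\<sigma> (of_int n) = of_int n"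
proof (cases "n \<ge> 0")
  case True
  then show ?thesis using sig_nat[of "nat n"] by simp
next
  case False
  then have "of_int n = - (of_nat (nat (-n)) :: complex)" by simp
  then show ?thesis using sig_uminus[of "of_nat (nat (-n))"] by simp
qed

lemma sig_rat[simp]: "\<sigma> (of_rat q) = of_rat q"
proof -
  obtain n m where nm: "quotient_of q = (n, m)" by (cases "quotient_of q")
  then have q: "q = of_int n / of_int m" by (rule quotient_of_div)
  have m: "m > 0" using nm quotient_of_denom_pos by blast
  have "of_rat q * of_int m = (of_int n :: complex)"
    using m by (simp add: q of_rat_divide of_rat_of_int_eq)
  then have "\<sigma> (of_rat q) * of_int m = of_int n"
    using sig_mul[of "of_rat q" "of_int m"] by simp
  then have "\<sigma> (of_rat q) = of_int n / of_int m" using m by (simp add: field_simps)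
  then show ?thesis by (simp add: q of_rat_divide of_rat_of_int_eq)
qed

lemma sig_E: "\<sigma> (E \<zeta> u x y) = E (\<sigma> \<zeta>) u x y"
  unfolding E_def power2_eq_square by simp

lemma sig_root: "isroot a b c d (\<sigma> \<zeta>)"
proof -
  have "of_int a * (\<zeta> * (\<zeta> * \<zeta>)) + of_int b * (\<zeta> * \<zeta>) + of_int c * \<zeta> + of_int d = 0"
    using root by (simp add: power2_eq_square power3_eq_cube mult.assoc)
  then have "\<sigma> (of_int a * (\<zeta> * (\<zeta> * \<zeta>)) + of_int b * (\<zeta> * \<zeta>) + of_int c * \<zeta> + of_int d) = 0"
    by simp
  then show ?thesis unfolding isroot_def power2_eq_square power3_eq_cube by (simp add: mult.assoc)
qed

end

definition sig :: "complex \<Rightarrow> complex \<Rightarrow> complex" where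
  "sig r w = (if w \<in> S then (case coords a b \<zeta> w of (u, x, y) \<Rightarrow> E r u x y) else 0)"

lemma sig_E': "sig r (E \<zeta> u x y) = E r u x y"
  by (simp add: sig_def coords_E)

lemma S_cases: assumes "w \<in> S" obtains u x y where "w = E \<zeta> u x y"
  using assms S_E by auto

lemma one_E: "1 = E \<zeta> 1 0 0" by (simp add: E_def)

lemma zeta_E: "\<zeta> = E \<zeta> 0 (1 / of_int a) 0" using a0 by (simp add: E_def of_rat_divide of_rat_of_int_eq)

lemma sig_emb: "isroot a b c d r \<Longrightarrow> sig r \<in> embeddings S"
  unfolding embeddings_def
proof (intro CollectI conjI ballI allI impI)
  have "sig r 1 = E r 1 0 0" using sig_E'[of r 1 0 0] one_E by metis
  then show "sig r 1 = 1" by (simp add: E_def)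
next
  fix w assume "w \<notin> S" then show "sig r w = 0" by (simp add: sig_def)
next
  fix v w assume r: "isroot a b c d r" and v: "v \<in> S" and w: "w \<in> S"
  from v obtain u x y where v': "v = E \<zeta> u x y" by (rule S_cases)
  from w obtain u' x' y' where w': "w = E \<zeta> u' x' y'" by (rule S_cases)
  show "sig r (v + w) = sig r v + sig r w"
    unfolding v' w' E_add sig_E' ..
  show "sig r (v * w) = sig r v * sig r w"
    unfolding v' w' E_mult[OF root_zeta] E_mult[OF r] sig_E' ..
qed

lemma emb_bij: "bij_betw (\<lambda>\<sigma>. \<sigma> \<zeta>) (embeddings S) {z. isroot a b c d z}"
proof (rule bij_betw_imageI)
  show "inj_on (\<lambda>\<sigma>. \<sigma> \<zeta>) (embeddings S)"
  proof (rule inj_onI)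
    fix \<sigma>1 \<sigma>2 assume s1: "\<sigma>1 \<in> embeddings S" and s2: "\<sigma>2 \<in> embeddings S" and eq: "\<sigma>1 \<zeta> = \<sigma>2 \<zeta>"
    show "\<sigma>1 = \<sigma>2"
    proof
      fix w show "\<sigma>1 w = \<sigma>2 w"
      proof (cases "w \<in> S")
        case True
        then obtain u x y where "w = E \<zeta> u x y" by (rule S_cases)
        then show ?thesis using sig_E[OF s1] sig_E[OF s2] eq by simp
      next
        case False
        then show ?thesis using sig_out[OF s1] sig_out[OF s2] by simp
      qed
    qed
  qed
  show "(\<lambda>\<sigma>. \<sigma> \<zeta>) ` embeddings S = {z. isroot a b c d z}"
  proof (intro set_eqI iffI)
    fix z assume "z \<in> (\<lambda>\<sigma>. \<sigma> \<zeta>) ` embeddings S"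
    then show "z \<in> {z. isroot a b c d z}" using sig_root by auto
  next
    fix z assume "z \<in> {z. isroot a b c d z}"
    then have r: "isroot a b c d z" by simp
    have "sig z \<zeta> = E z 0 (1 / of_int a) 0" using sig_E' zeta_E by metis
    then have "sig z \<zeta> = z" using a0 by (simp add: E_def of_rat_divide of_rat_of_int_eq)
    then show "z \<in> (\<lambda>\<sigma>. \<sigma> \<zeta>) ` embeddings S" using sig_emb[OF r] by (metis image_eqI)
  qed
qed


end


context cubic begin
lemma deg_le2: "degree [:p,q,r:] \<le> 2"
  by (metis degree_pCons_le le_SucI numeral_2_eq_2 le_trans degree_pCons_eq_if Suc_le_mono)
lemma deriv_nonzero:
  assumes "isroot a b c d z"
  shows "3 * of_int a * z^2 + 2 * of_int b * z + of_int c \<noteq> 0"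
proof -
  have "[:of_int c, 2 * of_int b, 3 * of_int a:] \<noteq> (0::rat poly)" using a0 by simp
  moreover have "degree [:of_int c, 2 * of_int b, 3 * of_int a:: rat:] \<le> 2"
    by (rule deg_le2)
  ultimately have "ev [:of_int c, 2 * of_int b, 3 * of_int a:] z \<noteq> 0"
    using ev_nonzero[OF assms] by blast
  then show ?thesis by (simp add: of_rat_mult of_rat_of_int_eq algebra_simps power2_eq_square)
qed
lemma roots:
  obtains r1 r2 r3 where "r1 \<noteq> r2" "r1 \<noteq> r3" "r2 \<noteq> r3"
    "{z. isroot a b c d z} = {r1, r2, r3}"
    "of_int b = - of_int a * (r1 + r2 + r3)"
    "of_int c = of_int a * (r1 * r2 + r1 * r3 + r2 * r3)"
    "of_int d = - of_int a * r1 * r2 * r3"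
proof -
  define A B C D where "A = (of_int a :: complex)" and "B = (of_int b :: complex)"
    and "C = (of_int c :: complex)" and "D = (of_int d :: complex)"
  have A0: "A \<noteq> 0" using a0 by (simp add: A_def)
  have dg1: "degree [:D, C, B, A:] > 0" using A0 by simp
  obtain r1 where "poly [:D, C, B, A:] r1 = 0" using alg_closed_imp_poly_has_root[OF dg1] by blast
  then have h1: "A * r1^3 + B * r1^2 + C * r1 + D = 0" by (simp add: algebra_simps power2_eq_square power3_eq_cube)
  have dg2: "degree [:C + B * r1 + A * r1^2, B + A * r1, A:] > 0" using A0 by simp
  obtain r2 where "poly [:C + B * r1 + A * r1^2, B + A * r1, A:] r2 = 0" using alg_closed_imp_poly_has_root[OF dg2] by blast
  then have h2: "A * r2^2 + (B + A * r1) * r2 + (C + B * r1 + A * r1^2) = 0" by (simp add: algebra_simps power2_eq_square)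
  define r3 where "r3 = - B / A - r1 - r2"
  have eB: "B = - A * (r1 + r2 + r3)" using A0 by (simp add: r3_def field_simps)
  have eC: "C = A * (r1 * r2 + r1 * r3 + r2 * r3)"
  proof -
    have "C - A * (r1 * r2 + r1 * r3 + r2 * r3) = A * r2^2 + (B + A * r1) * r2 + (C + B * r1 + A * r1^2)"
      unfolding eB by (simp add: algebra_simps power2_eq_square)
    then show ?thesis using h2 by simp
  qed
  have eD: "D = - A * r1 * r2 * r3"
  proof -
    have "D + A * r1 * r2 * r3 = A * r1^3 + B * r1^2 + C * r1 + D"
      unfolding eB eC by (simp add: algebra_simps power2_eq_square power3_eq_cube)
    then have "D + A * r1 * r2 * r3 = 0" using h1 by simp
    then show ?thesis by (simp add: add_eq_0_iff2)
  qed
  have fac: "A * z^3 + B * z^2 + C * z + D = A * ((z - r1) * (z - r2) * (z - r3))" for z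
    unfolding eB eC eD by (simp add: algebra_simps power2_eq_square power3_eq_cube)
  have rootset: "{z. isroot a b c d z} = {r1, r2, r3}"
    using A0 by (auto simp: isroot_def fac[unfolded A_def B_def C_def D_def] A_def)
  have isr: "isroot a b c d r1" "isroot a b c d r2" using rootset by auto
  have der: "3 * A * z^2 + 2 * B * z + C = A * ((z - r1) * (z - r2) + (z - r1) * (z - r3) + (z - r2) * (z - r3))" for z
    unfolding eB eC by (simp add: algebra_simps power2_eq_square)
  have dn: "3 * A * z^2 + 2 * B * z + C \<noteq> 0" if "isroot a b c d z" for z
    using deriv_nonzero[OF that] by (simp add: A_def B_def C_def)
  have "r1 \<noteq> r2" using dn[OF isr(1)] der[of r1] by auto
  moreover have "r1 \<noteq> r3" using dn[OF isr(1)] der[of r1] by auto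
  moreover have "r2 \<noteq> r3" using dn[OF isr(2)] der[of r2] by auto
  ultimately show ?thesis using that rootset eB eC eD unfolding A_def B_def C_def D_def by blast
qed


lemma trace_E:
  assumes "of_int b = - of_int a * (r1 + r2 + r3)"
    "of_int c = of_int a * (r1 * r2 + r1 * r3 + r2 * r3)"
    "of_int d = - of_int a * r1 * r2 * r3"
  shows "E r1 u x y + E r2 u x y + E r3 u x y = of_rat (trace (Nmat a b c d u x y))"
  unfolding trace_def sum_3 Nmat_entries E_def
  by (simp add: of_rat_add of_rat_mult of_rat_diff of_rat_minus of_rat_of_int_eq assms
      algebra_simps power2_eq_square)

lemma det_E:
  assumes "of_int b = - of_int a * (r1 + r2 + r3)"
    "of_int c = of_int a * (r1 * r2 + r1 * r3 + r2 * r3)"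
    "of_int d = - of_int a * r1 * r2 * r3"
  shows "E r1 u x y * E r2 u x y * E r3 u x y = of_rat (det (Nmat a b c d u x y))"
  unfolding det_3 Nmat_entries E_def
  by (simp add: of_rat_add of_rat_mult of_rat_diff of_rat_minus of_rat_of_int_eq assms
      algebra_simps power2_eq_square)

lemma main_S:
  "bij_betw (Nof a b c d \<zeta>) S {Nmat a b c d u x y | u x y :: rat. True}"
  "\<forall>v\<in>S. \<forall>w\<in>S. Nof a b c d \<zeta> (v + w) = Nof a b c d \<zeta> v + Nof a b c d \<zeta> w
          \<and> Nof a b c d \<zeta> (v * w) = Nof a b c d \<zeta> v ** Nof a b c d \<zeta> w"
  "Nof a b c d \<zeta> 1 = mat 1"
  "\<forall>v\<in>S. field_trace S v = of_rat (trace (Nof a b c d \<zeta> v))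
          \<and> field_norm S v = of_rat (det (Nof a b c d \<zeta> v))"
proof -
  show "bij_betw (Nof a b c d \<zeta>) S {Nmat a b c d u x y | u x y :: rat. True}"
    unfolding bij_betw_def
  proof
    show "inj_on (Nof a b c d \<zeta>) S"
    proof (rule inj_onI)
      fix v w assume "v \<in> S" "w \<in> S" and eq: "Nof a b c d \<zeta> v = Nof a b c d \<zeta> w"
      then obtain u x y u' x' y' where v: "v = E \<zeta> u x y" and w: "w = E \<zeta> u' x' y'"
        by (metis S_cases)
      from eq have "Nmat a b c d u x y = Nmat a b c d u' x' y'" by (simp add: v w Nof_E)
      then show "v = w" using Nmat_inj v w by metis
    qed
    show "Nof a b c d \<zeta> ` S = {Nmat a b c d u x y | u x y :: rat. True}"
    proof (intro set_eqI iffI)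
      fix m assume "m \<in> Nof a b c d \<zeta> ` S"
      then obtain v where "v \<in> S" "m = Nof a b c d \<zeta> v" by blast
      then obtain u x y where "m = Nmat a b c d u x y" by (metis S_cases Nof_E)
      then show "m \<in> {Nmat a b c d u x y | u x y :: rat. True}" by blast
    next
      fix m assume "m \<in> {Nmat a b c d u x y | u x y :: rat. True}"
      then obtain u x y where m: "m = Nmat a b c d u x y" by blast
      have "E \<zeta> u x y \<in> S" by simp
      then show "m \<in> Nof a b c d \<zeta> ` S" unfolding m by (metis Nof_E imageI)
    qed
  qed
  show "\<forall>v\<in>S. \<forall>w\<in>S. Nof a b c d \<zeta> (v + w) = Nof a b c d \<zeta> v + Nof a b c d \<zeta> w
          \<and> Nof a b c d \<zeta> (v * w) = Nof a b c d \<zeta> v ** Nof a b c d \<zeta> w"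
  proof (intro ballI)
    fix v w assume "v \<in> S" "w \<in> S"
    then obtain u x y u' x' y' where v: "v = E \<zeta> u x y" and w: "w = E \<zeta> u' x' y'"
      by (metis S_cases)
    show "Nof a b c d \<zeta> (v + w) = Nof a b c d \<zeta> v + Nof a b c d \<zeta> w
          \<and> Nof a b c d \<zeta> (v * w) = Nof a b c d \<zeta> v ** Nof a b c d \<zeta> w"
      unfolding v w E_add E_mult[OF root_zeta] Nof_E Nmat_add Nmat_mult by simp
  qed
  show "Nof a b c d \<zeta> 1 = mat 1"
    by (subst one_E) (simp add: Nof_E vec_eq_iff forall_3 Nmat_entries mat_def)
  obtain r1 r2 r3 where r: "r1 \<noteq> r2" "r1 \<noteq> r3" "r2 \<noteq> r3"
    "{z. isroot a b c d z} = {r1, r2, r3}"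
    "of_int b = - of_int a * (r1 + r2 + r3)"
    "of_int c = of_int a * (r1 * r2 + r1 * r3 + r2 * r3)"
    "of_int d = - of_int a * r1 * r2 * r3"
    by (rule roots)
  show "\<forall>v\<in>S. field_trace S v = of_rat (trace (Nof a b c d \<zeta> v))
          \<and> field_norm S v = of_rat (det (Nof a b c d \<zeta> v))"
  proof
    fix v assume "v \<in> S"
    then obtain u x y where v: "v = E \<zeta> u x y" by (rule S_cases)
    have "field_trace S v = (\<Sum>\<sigma>\<in>embeddings S. E (\<sigma> \<zeta>) u x y)"
      unfolding field_trace_def v by (rule sum.cong) (simp_all add: sig_E)
    also have "\<dots> = (\<Sum>z\<in>{z. isroot a b c d z}. E z u x y)"
      by (rule sum.reindex_bij_betw[OF emb_bij])
    also have "\<dots> = E r1 u x y + E r2 u x y + E r3 u x y"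
      unfolding r(4) using r(1-3) by (simp add: add.assoc)
    also have "\<dots> = of_rat (trace (Nof a b c d \<zeta> v))"
      unfolding v Nof_E by (rule trace_E[OF r(5-7)])
    finally have t: "field_trace S v = of_rat (trace (Nof a b c d \<zeta> v))" .
    have "field_norm S v = (\<Prod>\<sigma>\<in>embeddings S. E (\<sigma> \<zeta>) u x y)"
      unfolding field_norm_def v by (rule prod.cong) (simp_all add: sig_E)
    also have "\<dots> = (\<Prod>z\<in>{z. isroot a b c d z}. E z u x y)"
      by (rule prod.reindex_bij_betw[OF emb_bij])
    also have "\<dots> = E r1 u x y * E r2 u x y * E r3 u x y"
      unfolding r(4) using r(1-3) by (simp add: mult.assoc)
    also have "\<dots> = of_rat (det (Nof a b c d \<zeta> v))"
      unfolding v Nof_E by (rule det_E[OF r(5-7)])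
    finally show "field_trace S v = of_rat (trace (Nof a b c d \<zeta> v))
          \<and> field_norm S v = of_rat (det (Nof a b c d \<zeta> v))" using t by simp
  qed
qed
end

theorem proposition2p2:
  fixes a b c d :: int and \<zeta> :: complex
  defines "K \<equiv> Qadj \<zeta>"
      and "\<rho> \<equiv> of_int a * \<zeta>"
      and "\<omega> \<equiv> of_int a * \<zeta>^2 + of_int b * \<zeta>"
  assumes irred: "a \<noteq> 0" "irreducible (cubic_poly a b c d)"
      and root: "of_int a * \<zeta>^3 + of_int b * \<zeta>^2 + of_int c * \<zeta> + of_int d = 0"
      and canonical_basis:
        "ring_of_integers K = {of_int u + of_int x * \<rho> + of_int y * \<omega> | u x y :: int. True}"
  shows "bij_betw (Nof a b c d \<zeta>) (ring_of_integers K)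
           {Nmat a b c d (of_int u) (of_int x) (of_int y) | u x y :: int. True}
       \<and> (\<forall>\<alpha>\<in>ring_of_integers K. \<forall>\<beta>\<in>ring_of_integers K.
            Nof a b c d \<zeta> (\<alpha> + \<beta>) = Nof a b c d \<zeta> \<alpha> + Nof a b c d \<zeta> \<beta>
          \<and> Nof a b c d \<zeta> (\<alpha> * \<beta>) = Nof a b c d \<zeta> \<alpha> ** Nof a b c d \<zeta> \<beta>)
       \<and> Nof a b c d \<zeta> 1 = mat 1
       \<and> bij_betw (Nof a b c d \<zeta>) K {Nmat a b c d u x y | u x y :: rat. True}
       \<and> (\<forall>\<alpha>\<in>K. \<forall>\<beta>\<in>K.
            Nof a b c d \<zeta> (\<alpha> + \<beta>) = Nof a b c d \<zeta> \<alpha> + Nof a b c d \<zeta> \<beta>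
          \<and> Nof a b c d \<zeta> (\<alpha> * \<beta>) = Nof a b c d \<zeta> \<alpha> ** Nof a b c d \<zeta> \<beta>)
       \<and> (\<forall>\<alpha>\<in>K. field_trace K \<alpha> = of_rat (trace (Nof a b c d \<zeta> \<alpha>))
                \<and> field_norm K \<alpha> = of_rat (det (Nof a b c d \<zeta> \<alpha>)))"
proof -
  interpret cubic a b c d \<zeta> using irred root by unfold_locales auto
  have KS: "K = S" unfolding K_def by (rule K_eq)
  have Oeq: "ring_of_integers K = {E \<zeta> (of_int u) (of_int x) (of_int y) | u x y :: int. True}"
    unfolding canonical_basis \<rho>_def \<omega>_def E_def by (simp add: of_rat_of_int_eq)
  have OS: "ring_of_integers K \<subseteq> S" unfolding Oeq by auto
  note M = main_S
  have inj: "inj_on (Nof a b c d \<zeta>) (ring_of_integers K)"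
    using bij_betw_imp_inj_on[OF M(1)] OS by (rule inj_on_subset)
  have img: "Nof a b c d \<zeta> ` ring_of_integers K = {Nmat a b c d (of_int u) (of_int x) (of_int y) | u x y :: int. True}"
  proof (intro set_eqI iffI)
    fix m assume "m \<in> Nof a b c d \<zeta> ` ring_of_integers K"
    then obtain u x y :: int where "m = Nof a b c d \<zeta> (E \<zeta> (of_int u) (of_int x) (of_int y))"
      unfolding Oeq by blast
    then have "m = Nmat a b c d (of_int u) (of_int x) (of_int y)" by (simp add: Nof_E)
    then show "m \<in> {Nmat a b c d (of_int u) (of_int x) (of_int y) | u x y :: int. True}" by blast
  next
    fix m assume "m \<in> {Nmat a b c d (of_int u) (of_int x) (of_int y) | u x y :: int. True}"
    then obtain u x y :: int where m: "m = Nmat a b c d (of_int u) (of_int x) (of_int y)" by blast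
    have "E \<zeta> (of_int u) (of_int x) (of_int y) \<in> ring_of_integers K" unfolding Oeq by blast
    then show "m \<in> Nof a b c d \<zeta> ` ring_of_integers K" unfolding m by (metis Nof_E imageI)
  qed
  have P1: "bij_betw (Nof a b c d \<zeta>) (ring_of_integers K)
           {Nmat a b c d (of_int u) (of_int x) (of_int y) | u x y :: int. True}"
    unfolding bij_betw_def using inj img by blast
  have P2: "\<forall>\<alpha>\<in>ring_of_integers K. \<forall>\<beta>\<in>ring_of_integers K.
            Nof a b c d \<zeta> (\<alpha> + \<beta>) = Nof a b c d \<zeta> \<alpha> + Nof a b c d \<zeta> \<beta>
          \<and> Nof a b c d \<zeta> (\<alpha> * \<beta>) = Nof a b c d \<zeta> \<alpha> ** Nof a b c d \<zeta> \<beta>"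
    using M(2) OS by blast
  show ?thesis using P1 P2 M(1,3,4) M(2) unfolding KS by blast
qed

end
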